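(* Let $0<b<c$ and $x_1,x_2,\dots\in\mathbb{R}^d$. Define $D_0=\frac{bc}{c-b}I$ and $D_t=\big(D_{t-1}^{-1}+c^{-1}I\big)^{-1}+x_tx_t^\top$ for $t\ge1$, and $D'_{t-1}=\big(I+c^{-1}D_{t-1}\big)^{-1}$. Then for all $t\ge1$, \[ D'_{t-1}D_t^{-1}x_tx_t^\top D_t^{-1}D'_{t-1}-D_{t-1}^{-1}+D'_{t-1}\big(D_t^{-1}D'_{t-1}+c^{-1}I\big)\preceq 0, \] where $A\preceq 0$ means $A$ is negative semidefinite. *)

theory Defs
  imports "HOL-Analysis.Analysis"
begin

definition outer :: "real^'n \<Rightarrow> real^'n^'n" where
  "outer x = (\<chi> i j. x $ i * x $ j)"

definition neg_semidef :: "real^'n^'n \<Rightarrow> bool" where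
  "neg_semidef A \<longleftrightarrow> (\<forall>v. v \<bullet> (A *v v) \<le> 0)"

primrec Dmat :: "real \<Rightarrow> real \<Rightarrow> (nat \<Rightarrow> real^'n) \<Rightarrow> nat \<Rightarrow> real^'n^'n" where
  "Dmat b c x 0 = mat (b * c / (c - b))"
| "Dmat b c x (Suc t) =
     matrix_inv (matrix_inv (Dmat b c x t) + mat (1 / c)) + outer (x (Suc t))"

definition Dprime :: "real \<Rightarrow> real \<Rightarrow> (nat \<Rightarrow> real^'n) \<Rightarrow> nat \<Rightarrow> real^'n^'n" where
  "Dprime b c x t = matrix_inv (mat 1 + (1 / c) *\<^sub>R Dmat b c x t)"

end

theory Submission imports Defs begin

lemma mat_mulv: "mat k *v (v::real^'n) = k *\<^sub>R v"
  by (simp add: vec_eq_iff matrix_vector_mult_def mat_def if_distrib if_distribR cong del: if_weak_cong)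

lemma outer_mulv: "outer x *v v = (x \<bullet> v) *\<^sub>R x"
  by (simp add: vec_eq_iff matrix_vector_mult_def outer_def inner_vec_def sum_distrib_left sum_distrib_right mult_ac)

lemma outer_sym: "transpose (outer x) = outer x"
  by (simp add: outer_def transpose_def vec_eq_iff mult.commute)

lemma sym_dot: "transpose A = A \<Longrightarrow> u \<bullet> (A *v z) = (A *v u) \<bullet> (z::real^'n)"
  by (metis dot_lmul_matrix vector_transpose_matrix)

lemma inv_props:
  fixes A :: "real^'n^'n"
  assumes "invertible A"
  shows "A ** matrix_inv A = mat 1" "matrix_inv A ** A = mat 1"
  using someI_ex[of "\<lambda>A'. A ** A' = mat 1 \<and> A' ** A = mat 1"] assms
  unfolding invertible_def matrix_inv_def by auto

lemma inv_sym:
  fixes A :: "real^'n^'n"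
  assumes "invertible A" "transpose A = A"
  shows "transpose (matrix_inv A) = matrix_inv A"
proof -
  have "transpose (matrix_inv A) ** A = mat 1"
    using inv_props(1)[OF assms(1)] assms(2) by (metis matrix_transpose_mul transpose_mat)
  then have "transpose (matrix_inv A) = transpose (matrix_inv A) ** (A ** matrix_inv A)"
    using inv_props(1)[OF assms(1)] by simp
  also have "\<dots> = matrix_inv A"
    by (simp add: matrix_mul_assoc \<open>transpose (matrix_inv A) ** A = mat 1\<close>)
  finally show ?thesis .
qed

definition pd :: "real^'n^'n \<Rightarrow> bool" where
  "pd A \<longleftrightarrow> (\<forall>v. v \<noteq> 0 \<longrightarrow> 0 < v \<bullet> (A *v v))"

lemma pd_invertible: "pd A \<Longrightarrow> invertible A"
  unfolding invertible_left_inverse matrix_left_invertible_ker pd_def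
  by (metis inner_zero_right less_irrefl)

lemma pd_inv: fixes A :: "real^'n^'n" assumes "pd A" shows "pd (matrix_inv A)"
  unfolding pd_def
proof (intro allI impI)
  fix v :: "real^'n" assume v: "v \<noteq> 0"
  have inv: "invertible A" using pd_invertible[OF assms] .
  define u where "u = matrix_inv A *v v"
  have vu: "v = A *v u" unfolding u_def using inv_props(1)[OF inv]
    by (simp add: matrix_vector_mul_assoc)
  have "u \<noteq> 0" using v vu by auto
  then have "0 < u \<bullet> (A *v u)" using assms unfolding pd_def by auto
  then show "0 < v \<bullet> (matrix_inv A *v v)"
    by (simp add: vu[symmetric] u_def[symmetric] inner_commute)
qed

lemma pd_add_psd: "pd A \<Longrightarrow> (\<forall>v. 0 \<le> v \<bullet> (B *v v)) \<Longrightarrow> pd (A + B)"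
  unfolding pd_def by (simp add: matrix_vector_mult_add_rdistrib inner_add_right add_pos_nonneg)

lemma psd_mat: "0 \<le> k \<Longrightarrow> 0 \<le> (v::real^'n) \<bullet> (mat k *v v)"
  by (simp add: mat_mulv)

lemma psd_outer: "0 \<le> v \<bullet> (outer x *v v)"
  by (simp add: outer_mulv inner_commute)


lemma transpose_add': "transpose (A + B) = transpose A + transpose (B::real^'n^'n)"
  by (simp add: transpose_def vec_eq_iff)

lemma Dmat_inv:
  fixes x :: "nat \<Rightarrow> real^'n"
  assumes "0 < b" "b < c"
  shows "transpose (Dmat b c x t) = Dmat b c x t \<and> pd (Dmat b c x t)"
proof (induction t)
  case 0
  have "0 < b * c / (c - b)" using assms by simp
  then show ?case using assms by (auto simp: pd_def mat_mulv intro!: divide_pos_pos mult_pos_pos)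
next
  case (Suc t)
  let ?D = "Dmat b c x t"
  have inv: "invertible ?D" using Suc pd_invertible by blast
  have s1: "transpose (matrix_inv ?D) = matrix_inv ?D" using inv_sym inv Suc by blast
  have p1: "pd (matrix_inv ?D)" using pd_inv Suc by blast
  let ?Ai = "matrix_inv ?D + mat (1/c)"
  have s2: "transpose ?Ai = ?Ai" using s1 by (simp add: transpose_add')
  have p2: "pd ?Ai" by (intro pd_add_psd[OF p1] allI psd_mat) (use assms in simp)
  have s3: "transpose (matrix_inv ?Ai) = matrix_inv ?Ai" using inv_sym pd_invertible p2 s2 by blast
  have p3: "pd (matrix_inv ?Ai)" using pd_inv p2 by blast
  have "pd (matrix_inv ?Ai + outer (x (Suc t)))" by (intro pd_add_psd[OF p3] allI psd_outer)
  then show ?case using s3 by (simp add: transpose_add' outer_sym)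
qed

theorem lemma3:
  fixes b c :: real and x :: "nat \<Rightarrow> real^'n" and t :: nat
  assumes "0 < b" and "b < c" and "1 \<le> t"
  shows "neg_semidef
    (Dprime b c x (t - 1) ** matrix_inv (Dmat b c x t) ** outer (x t)
       ** matrix_inv (Dmat b c x t) ** Dprime b c x (t - 1)
     - matrix_inv (Dmat b c x (t - 1))
     + Dprime b c x (t - 1) **
         (matrix_inv (Dmat b c x t) ** Dprime b c x (t - 1) + mat (1 / c)))"
proof -
  obtain s where ts: "t = Suc s" using assms(3) by (cases t) auto
  have c0: "0 < c" using assms by simp
  define D where "D = Dmat b c x s"
  define Di where "Di = matrix_inv D"
  define Ai where "Ai = Di + mat (1/c)"
  define A where "A = matrix_inv Ai"
  define X where "X = outer (x t)"
  define B where "B = A + X"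
  define M where "M = matrix_inv B"
  define P where "P = mat 1 + (1/c) *\<^sub>R D"
  define Q where "Q = matrix_inv P"
  have BD: "Dmat b c x t = B" unfolding B_def A_def Ai_def Di_def D_def X_def ts by simp
  have QD: "Dprime b c x (t - 1) = Q" unfolding Q_def P_def D_def Dprime_def ts by simp
  have D1: "Dmat b c x (t - 1) = D" unfolding D_def ts by simp
  have sD: "transpose D = D" and pD: "pd D" using Dmat_inv[OF assms(1,2)] unfolding D_def by auto
  have iD: "invertible D" using pD pd_invertible by blast
  have sDi: "transpose Di = Di" unfolding Di_def using inv_sym iD sD by blast
  have pDi: "pd Di" unfolding Di_def using pd_inv pD by blast
  have sAi: "transpose Ai = Ai" unfolding Ai_def using sDi by (simp add: transpose_add')
  have pAi: "pd Ai" unfolding Ai_def by (intro pd_add_psd[OF pDi] allI psd_mat) (use c0 in simp)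
  have iAi: "invertible Ai" using pAi pd_invertible by blast
  have sA: "transpose A = A" unfolding A_def using inv_sym iAi sAi by blast
  have pA: "pd A" unfolding A_def using pd_inv pAi by blast
  have sB: "transpose B = B" unfolding B_def X_def using sA by (simp add: transpose_add' outer_sym)
  have pB: "pd B" unfolding B_def X_def using pd_add_psd[OF pA] psd_outer by blast
  have iB: "invertible B" using pB pd_invertible by blast
  have sM: "transpose M = M" unfolding M_def using inv_sym iB sB by blast
  have sP: "transpose P = P" unfolding P_def using sD by (simp add: transpose_add' transpose_scalar)
  have pP: "pd P" unfolding P_def pd_def
  proof (intro allI impI)
    fix v :: "real^'n" assume "v \<noteq> 0"
    then have "0 < v \<bullet> v" by simp
    moreover have "0 \<le> v \<bullet> (D *v v)" using pD unfolding pd_def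
      by (metis inner_zero_left order.strict_implies_order order_refl)
    ultimately show "0 < v \<bullet> ((mat 1 + (1/c) *\<^sub>R D) *v v)"
      using c0 by (simp add: matrix_vector_mult_add_rdistrib inner_add_right matrix_scaleR_vector_ac[symmetric]
          matrix_vector_mult_scaleR add_pos_nonneg)
  qed
  have iP: "invertible P" using pP pd_invertible by blast
  have sQ: "transpose Q = Q" unfolding Q_def using inv_sym iP sP by blast
  show ?thesis unfolding neg_semidef_def BD QD D1 M_def[symmetric] X_def[symmetric] Di_def[symmetric]
  proof
    fix v :: "real^'n"
    define w where "w = Q *v v"
    define y where "y = M *v w"
    define a where "a = x t \<bullet> y"
    have PQ: "P ** Q = mat 1" unfolding Q_def using inv_props[OF iP] by simp
    have BM: "B ** M = mat 1" unfolding M_def using inv_props[OF iB] by simp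
    have AAi: "A ** Ai = mat 1" "Ai ** A = mat 1" unfolding A_def using inv_props[OF iAi] by simp_all
    have DDi: "D ** Di = mat 1" "Di ** D = mat 1" unfolding Di_def using inv_props[OF iD] by simp_all
    have vw: "v = w + (1/c) *\<^sub>R (D *v w)"
    proof -
      have "v = P *v w" unfolding w_def by (simp add: matrix_vector_mul_assoc PQ)
      then show ?thesis unfolding P_def
        by (simp add: matrix_vector_mult_add_rdistrib matrix_scaleR_vector_ac[symmetric] matrix_vector_mult_scaleR)
    qed
    have wy: "w = A *v y + a *\<^sub>R x t"
    proof -
      have "w = B *v y" unfolding y_def by (simp add: matrix_vector_mul_assoc BM)
      then show ?thesis unfolding B_def X_def a_def
        by (simp add: matrix_vector_mult_add_rdistrib outer_mulv)
    qed
    have Ev: "(Q ** M ** X ** M ** Q - Di + Q ** (M ** Q + mat (1 / c))) *v v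
       = Q *v (M *v (X *v y)) - Di *v v + Q *v (M *v w) + (1/c) *\<^sub>R w"
      unfolding y_def w_def
      by (simp add: matrix_vector_mult_add_rdistrib matrix_vector_mult_diff_rdistrib
          matrix_add_ldistrib matrix_vector_mul_assoc[symmetric] mat_mulv matrix_vector_mult_scaleR)
    have t1: "v \<bullet> (Q *v (M *v (X *v y))) = a * a"
    proof -
      have "v \<bullet> (Q *v (M *v (X *v y))) = w \<bullet> (M *v (X *v y))" unfolding w_def using sym_dot[OF sQ] by simp
      also have "\<dots> = y \<bullet> (X *v y)" unfolding y_def using sym_dot[OF sM] by simp
      also have "\<dots> = a * a" unfolding X_def a_def by (simp add: outer_mulv inner_commute)
      finally show ?thesis .
    qed
    have t3: "v \<bullet> (Q *v (M *v w)) = y \<bullet> w"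
    proof -
      have "v \<bullet> (Q *v (M *v w)) = w \<bullet> (M *v w)" unfolding w_def using sym_dot[OF sQ] by simp
      also have "\<dots> = y \<bullet> w" unfolding y_def using sym_dot[OF sM] by (simp add: inner_commute)
      finally show ?thesis .
    qed
    have DiD: "Di *v (D *v w) = w" by (simp add: matrix_vector_mul_assoc DDi)
    have DDiw: "(D *v w) \<bullet> (Di *v w) = w \<bullet> w"
      using sym_dot[OF sD, of w "Di *v w"] by (simp add: matrix_vector_mul_assoc DDi)
    have Div: "Di *v v = Di *v w + (1/c) *\<^sub>R w"
      by (subst vw) (simp add: matrix_vector_right_distrib matrix_vector_mult_scaleR DiD)
    have t24: "(1/c) * (v \<bullet> w) - v \<bullet> (Di *v v) = - (w \<bullet> (Ai *v w))"
    proof -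
      have "v \<bullet> (Di *v v) = w \<bullet> (Di *v w) + (1/c) * (w \<bullet> w) + (1/c) * (w \<bullet> w) + (1/c) * (1/c) * ((D *v w) \<bullet> w)"
        unfolding Div by (subst vw) (simp add: inner_add_left inner_add_right DDiw algebra_simps inner_commute)
      moreover have "v \<bullet> w = w \<bullet> w + (1/c) * ((D *v w) \<bullet> w)"
        by (subst vw) (simp add: inner_add_left)
      moreover have "w \<bullet> (Ai *v w) = w \<bullet> (Di *v w) + (1/c) * (w \<bullet> w)"
        unfolding Ai_def by (simp add: matrix_vector_mult_add_rdistrib mat_mulv inner_add_right)
      ultimately show ?thesis by (simp add: algebra_simps)
    qed
    define s where "s = x t \<bullet> (Ai *v x t)"
    have s0: "0 \<le> s" unfolding s_def using pAi unfolding pd_def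
      by (metis inner_zero_left order.strict_implies_order order_refl)
    have Aiw: "Ai *v w = y + a *\<^sub>R (Ai *v x t)"
      unfolding wy by (simp add: matrix_vector_mult_add_rdistrib matrix_vector_mul_assoc AAi
          matrix_vector_mult_scaleR matrix_vector_right_distrib)
    have AyAix: "(A *v y) \<bullet> (Ai *v x t) = a"
      using sym_dot[OF sA, of y "Ai *v x t"] by (simp add: matrix_vector_mul_assoc AAi a_def inner_commute)
    have wAiw: "w \<bullet> (Ai *v w) = (A *v y) \<bullet> y + 2 * a * a + a * a * s"
      unfolding Aiw by (subst wy) (simp add: inner_add_left inner_add_right AyAix s_def a_def algebra_simps inner_commute)
    have yw: "y \<bullet> w = (A *v y) \<bullet> y + a * a"
      by (subst wy) (simp add: inner_add_right a_def inner_commute)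
    have "v \<bullet> ((Q ** M ** X ** M ** Q - Di + Q ** (M ** Q + mat (1 / c))) *v v) = - (a * a * s)"
      unfolding Ev using t1 t3 t24 wAiw yw by (simp add: inner_add_right inner_diff_right algebra_simps)
    then show "v \<bullet> ((Q ** M ** X ** M ** Q - Di + Q ** (M ** Q + mat (1 / c))) *v v) \<le> 0"
      using s0 by simp
  qed
qed

end
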